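(* Let $0<\nu\le1$ and define, for $\xi\in\mathbb{R}^n$, $$\tilde f(\xi)=\sum_{j\ge0}(j!)^{-1/\nu}|\xi|^j,\qquad F(\xi)=\sum_{j\ge0}(j+1)^{-1}(j!)^{-1/\nu}|\xi|^{j+1},$$ regarded also as functions of $|\xi|\in\mathbb{R}^+$ (so $\tilde f=dF/d|\xi|$). Then: (A.3) $\sum_{j\ge1}j(j!)^{-1/\nu}|\xi|^j\le|\xi|^\nu\sum_{j\ge0}(j!)^{-1/\nu}|\xi|^j\le\sum_{j\ge0}(j+1)(j!)^{-1/\nu}|\xi|^j$; (A.4) $\sum_{j\ge0}(j+1)^{-1}(j!)^{-1/\nu}|\xi|^{j+1}\le|\xi|^{1-\nu}\sum_{j\ge0}(j!)^{-1/\nu}|\xi|^j$; (A.5) for $\xi\ne0$, $\tilde f^{-1}(d\tilde f/d|\xi|)\le|\xi|^{\nu-1}\le F^{-1}\tilde f=F^{-1}(dF/d|\xi|)$; (A.6) $|\xi|^\nu\tilde f\le d(|\xi|\tilde f)/d|\xi|$; (A.7) for all $a>0$, $F(a)(|\xi|\vee a)^{\nu-1}\exp(\nu^{-1}(|\xi|^\nu-a^\nu))\le\tilde f(\xi)\le\exp(\nu^{-1}|\xi|^\nu)$; (A.8) $\tilde f(\xi)=(2\pi)^{(\nu-1)/(2\nu)}\nu^{1/2}|\xi|^{(\nu-1)/2}\exp(\nu^{-1}|\xi|^\nu)(1+o(1))$ as $|\xi|\to\infty$.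
   Context: $a\vee b=\max(a,b)$. *)

theory Defs
  imports "HOL-Analysis.Analysis" "HOL-Library.Landau_Symbols"
begin

definition ftilde :: "real \<Rightarrow> real \<Rightarrow> real" where
  "ftilde \<nu> r = (\<Sum>j. fact j powr (-1/\<nu>) * r ^ j)"

definition Fbig :: "real \<Rightarrow> real \<Rightarrow> real" where
  "Fbig \<nu> r = (\<Sum>j. inverse (real (j+1)) * fact j powr (-1/\<nu>) * r ^ (j+1))"

end

theory Submission
  imports Defs "HOL-Probability.Probability" "HOL-Real_Asymp.Real_Asymp"
begin


definition cc :: "real \<Rightarrow> nat \<Rightarrow> real" where "cc \<nu> n = fact n powr (-1/\<nu>)"

lemma cc_pos: "cc \<nu> n > 0" by (simp add: cc_def)

lemma cc_le: assumes "0 < \<nu>" "\<nu> \<le> 1" shows "cc \<nu> n \<le> inverse (fact n)"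
proof -
  have "fact n powr (-1/\<nu>) \<le> fact n powr (-1)"
    using assms by (intro powr_mono) (auto simp: field_simps)
  then show ?thesis by (simp add: cc_def powr_minus)
qed

lemma summable_cc: assumes "0 < \<nu>" "\<nu> \<le> 1" shows "summable (\<lambda>n. cc \<nu> n * y ^ n)"
proof (rule summable_comparison_test[of _ "\<lambda>n. inverse (fact n) * \<bar>y\<bar> ^ n"])
  show "\<exists>N. \<forall>n\<ge>N. norm (cc \<nu> n * y ^ n) \<le> inverse (fact n) * \<bar>y\<bar> ^ n"
  proof (intro exI allI impI)
    fix n :: nat
    have "\<bar>cc \<nu> n\<bar> = cc \<nu> n" using cc_pos[of \<nu> n] by simp
    then show "norm (cc \<nu> n * y ^ n) \<le> inverse (fact n) * \<bar>y\<bar> ^ n"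
      using cc_le[OF assms, of n] by (simp add: abs_mult power_abs mult_right_mono)
  qed
  show "summable (\<lambda>n. inverse (fact n) * \<bar>y\<bar> ^ n)"
    using summable_exp[of "\<bar>y\<bar>"] by simp
qed

lemma ftilde_eq: "ftilde \<nu> = (\<lambda>r. \<Sum>n. cc \<nu> n * r ^ n)"
  by (simp add: ftilde_def[abs_def] cc_def)

definition ee :: "real \<Rightarrow> nat \<Rightarrow> real" where "ee \<nu> n = (case n of 0 \<Rightarrow> 0 | Suc k \<Rightarrow> cc \<nu> k)"
definition FF :: "real \<Rightarrow> nat \<Rightarrow> real" where "FF \<nu> n = (case n of 0 \<Rightarrow> 0 | Suc k \<Rightarrow> cc \<nu> k / real (Suc k))"

lemma summable_ee: assumes "0 < \<nu>" "\<nu> \<le> 1" shows "summable (\<lambda>n. ee \<nu> n * y ^ n)"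
proof -
  have "summable (\<lambda>k. y * (cc \<nu> k * y ^ k))" by (intro summable_mult summable_cc assms)
  then have "summable (\<lambda>k. ee \<nu> (Suc k) * y ^ Suc k)" by (simp add: ee_def mult_ac)
  then show ?thesis by (subst summable_Suc_iff[symmetric])
qed

lemma summable_FF: assumes "0 < \<nu>" "\<nu> \<le> 1" shows "summable (\<lambda>n. FF \<nu> n * y ^ n)"
proof -
  have "summable (\<lambda>k. FF \<nu> (Suc k) * y ^ Suc k)"
  proof (rule summable_comparison_test[of _ "\<lambda>k. \<bar>y\<bar> * (cc \<nu> k * \<bar>y\<bar> ^ k)"])
    show "\<exists>N. \<forall>n\<ge>N. norm (FF \<nu> (Suc n) * y ^ Suc n) \<le> \<bar>y\<bar> * (cc \<nu> n * \<bar>y\<bar> ^ n)"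
    proof (intro exI allI impI)
      fix n
      have "norm (FF \<nu> (Suc n) * y ^ Suc n) = (\<bar>y\<bar> * (cc \<nu> n * \<bar>y\<bar> ^ n)) / real (Suc n)"
        using cc_pos[of \<nu> n] by (simp add: FF_def abs_mult power_abs)
      also have "\<dots> \<le> \<bar>y\<bar> * (cc \<nu> n * \<bar>y\<bar> ^ n)"
        using cc_pos[of \<nu> n] divide_left_mono[of 1 "real (Suc n)" "\<bar>y\<bar> * (cc \<nu> n * \<bar>y\<bar> ^ n)"] by simp
      finally show "norm (FF \<nu> (Suc n) * y ^ Suc n) \<le> \<bar>y\<bar> * (cc \<nu> n * \<bar>y\<bar> ^ n)" .
    qed
    show "summable (\<lambda>k. \<bar>y\<bar> * (cc \<nu> k * \<bar>y\<bar> ^ k))" by (intro summable_mult summable_cc assms)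
  qed
  then show ?thesis by (subst summable_Suc_iff[symmetric])
qed

lemma deriv_powser:
  fixes e :: "nat \<Rightarrow> real"
  assumes "\<And>y. summable (\<lambda>n. e n * y ^ n)"
  shows "((\<lambda>x. \<Sum>n. e n * x ^ n) has_real_derivative (\<Sum>n. diffs e n * r ^ n)) (at r)"
    "deriv (\<lambda>x. \<Sum>n. e n * x ^ n) r = (\<Sum>n. diffs e n * r ^ n)"
  using termdiffs_strong_converges_everywhere[of e r, OF assms]
  by (auto intro: DERIV_imp_deriv)

lemma diffs_cc: "diffs (cc \<nu>) n = real (Suc n) * cc \<nu> (Suc n)" by (simp add: diffs_def)
lemma diffs_ee: "diffs (ee \<nu>) n = real (Suc n) * cc \<nu> n" by (simp add: diffs_def ee_def)
lemma diffs_FF: "diffs (FF \<nu>) n = cc \<nu> n" by (simp add: diffs_def FF_def)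

lemma Fbig_eq: assumes "0 < \<nu>" "\<nu> \<le> 1" shows "Fbig \<nu> = (\<lambda>r. \<Sum>n. FF \<nu> n * r ^ n)"
proof
  fix r :: real
  have "(\<Sum>n. FF \<nu> n * r ^ n) = (\<Sum>n. FF \<nu> (Suc n) * r ^ Suc n)"
    using suminf_split_head[OF summable_FF[OF assms, of r]] by (simp add: FF_def)
  also have "\<dots> = Fbig \<nu> r"
    by (simp add: Fbig_def FF_def cc_def field_simps)
  finally show "Fbig \<nu> r = (\<Sum>n. FF \<nu> n * r ^ n)" by simp
qed

lemma rf_eq: assumes "0 < \<nu>" "\<nu> \<le> 1" shows "(\<lambda>r. r * ftilde \<nu> r) = (\<lambda>r. \<Sum>n. ee \<nu> n * r ^ n)"
proof
  fix r :: real
  have "(\<Sum>n. ee \<nu> n * r ^ n) = (\<Sum>n. ee \<nu> (Suc n) * r ^ Suc n)"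
    using suminf_split_head[OF summable_ee[OF assms, of r]] by (simp add: ee_def)
  also have "\<dots> = (\<Sum>n. r * (cc \<nu> n * r ^ n))"
    by (simp add: ee_def mult_ac)
  also have "\<dots> = r * ftilde \<nu> r"
    using summable_cc[OF assms, of r] by (simp add: ftilde_eq suminf_mult)
  finally show "r * ftilde \<nu> r = (\<Sum>n. ee \<nu> n * r ^ n)" by simp
qed




lemma bpow:
  assumes "0 < \<nu>" "r > 0"
  shows "(cc \<nu> j * r ^ j) powr \<nu> = (r powr \<nu>) ^ j / fact j"
proof -
  have "(cc \<nu> j * r ^ j) powr \<nu> = cc \<nu> j powr \<nu> * (r ^ j) powr \<nu>"
    using assms cc_pos[of \<nu> j] by (simp add: powr_mult)
  also have "cc \<nu> j powr \<nu> = inverse (fact j)"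
    unfolding cc_def powr_powr using assms by (simp add: powr_minus)
  also have "(r ^ j) powr \<nu> = (r powr \<nu>) ^ j"
    using assms by (simp add: powr_realpow[symmetric] powr_powr powr_power mult.commute)
  finally show ?thesis by (simp add: field_simps)
qed

lemma bkey:
  assumes "0 < \<nu>" "r > 0"
  shows "real (Suc j) * (cc \<nu> (Suc j) * r ^ Suc j) powr \<nu> = r powr \<nu> * (cc \<nu> j * r ^ j) powr \<nu>"
  unfolding bpow[OF assms] fact_Suc by (simp del: of_nat_Suc add: field_simps)

lemma bsplit: fixes b \<nu> :: real assumes "b > 0" shows "b = b powr \<nu> * b powr (1 - \<nu>)"
  using assms by (simp add: powr_add[symmetric])

lemma young: fixes \<nu> A B :: real
  assumes "0 < \<nu>" "\<nu> \<le> 1" "A > 0" "B > 0"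
  shows "A powr \<nu> * B powr (1 - \<nu>) \<le> \<nu> * A + (1 - \<nu>) * B"
  using Youngs_inequality_0[of \<nu> "1-\<nu>" A B] assms by simp

lemma bpos: "r > 0 \<Longrightarrow> cc \<nu> j * r ^ j > 0" using cc_pos by simp

lemma T1:
  assumes "0 < \<nu>" "\<nu> \<le> 1" "r > 0"
  shows "real (Suc j) * (cc \<nu> (Suc j) * r ^ Suc j)
     \<le> r powr \<nu> * (\<nu> * (cc \<nu> j * r ^ j) + (1-\<nu>) * (cc \<nu> (Suc j) * r ^ Suc j))"
proof -
  define A where "A = cc \<nu> j * r ^ j"
  define B where "B = cc \<nu> (Suc j) * r ^ Suc j"
  have A: "A > 0" and B: "B > 0" using bpos assms by (auto simp: A_def B_def simp del: power_Suc)
  have "real (Suc j) * B = real (Suc j) * B powr \<nu> * B powr (1 - \<nu>)"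
    using bsplit[OF B, of \<nu>] by (simp add: mult.assoc)
  also have "\<dots> = r powr \<nu> * (A powr \<nu> * B powr (1 - \<nu>))"
    using bkey[OF assms(1,3), of j] by (simp add: A_def B_def mult_ac)
  also have "\<dots> \<le> r powr \<nu> * (\<nu> * A + (1-\<nu>) * B)"
    by (intro mult_left_mono young assms A B) auto
  finally show ?thesis by (simp add: A_def B_def)
qed

lemma T2:
  assumes "0 < \<nu>" "\<nu> \<le> 1" "r > 0"
  shows "r powr \<nu> * (cc \<nu> j * r ^ j)
     \<le> \<nu> * (real (Suc (Suc j)) * (cc \<nu> (Suc j) * r ^ Suc j)) + (1-\<nu>) * (real (Suc j) * (cc \<nu> j * r ^ j))"
proof -
  define A where "A = cc \<nu> j * r ^ j"
  define B where "B = cc \<nu> (Suc j) * r ^ Suc j"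
  have A: "A > 0" and B: "B > 0" using bpos assms by (auto simp: A_def B_def simp del: power_Suc)
  have "r powr \<nu> * A = r powr \<nu> * A powr \<nu> * A powr (1 - \<nu>)"
    using bsplit[OF A, of \<nu>] by (simp add: mult.assoc)
  also have "\<dots> = real (Suc j) * (B powr \<nu> * A powr (1 - \<nu>))"
    using bkey[OF assms(1,3), of j] by (simp add: A_def B_def mult_ac)
  also have "\<dots> \<le> real (Suc j) * (\<nu> * B + (1-\<nu>) * A)"
    by (intro mult_left_mono young assms A B) auto
  also have "\<dots> \<le> \<nu> * (real (Suc (Suc j)) * B) + (1-\<nu>) * (real (Suc j) * A)"
    using assms A B by (simp add: algebra_simps)
  finally show ?thesis by (simp add: A_def B_def)
qed

lemma T3:
  assumes "0 < \<nu>" "\<nu> \<le> 1" "r > 0"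
  shows "inverse (real (Suc j)) * cc \<nu> j * r ^ Suc j
     \<le> r powr (1-\<nu>) * (\<nu> * (cc \<nu> (Suc j) * r ^ Suc j) + (1-\<nu>) * (cc \<nu> j * r ^ j))"
proof -
  define A where "A = cc \<nu> j * r ^ j"
  define B where "B = cc \<nu> (Suc j) * r ^ Suc j"
  have A: "A > 0" and B: "B > 0" using bpos assms by (auto simp: A_def B_def simp del: power_Suc)
  have rr: "r = r powr (1-\<nu>) * r powr \<nu>" using assms by (simp add: powr_add[symmetric])
  have "inverse (real (Suc j)) * cc \<nu> j * r ^ Suc j = r * (A / real (Suc j))"
    by (simp add: A_def field_simps)
  also have "A / real (Suc j) = A powr \<nu> * A powr (1 - \<nu>) / real (Suc j)"
    using bsplit[OF A, of \<nu>] by simp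
  also have "r * \<dots> = r powr (1-\<nu>) * ((r powr \<nu> * A powr \<nu>) / real (Suc j) * A powr (1 - \<nu>))"
    by (subst rr) (simp add: field_simps)
  also have "(r powr \<nu> * A powr \<nu>) / real (Suc j) = B powr \<nu>"
    using bkey[OF assms(1,3), of j] by (simp add: A_def B_def field_simps)
  also have "r powr (1-\<nu>) * (B powr \<nu> * A powr (1 - \<nu>)) \<le> r powr (1-\<nu>) * (\<nu> * B + (1-\<nu>) * A)"
    by (intro mult_left_mono young assms A B) auto
  finally show ?thesis by (simp add: A_def B_def)
qed




lemma cc_nn: "0 \<le> cc \<nu> n" using cc_pos[of \<nu> n] by simp

lemma cc0: "cc \<nu> 0 = 1" by (simp add: cc_def)

lemma ftilde_pos: assumes "0 < \<nu>" "\<nu> \<le> 1" "r \<ge> 0" shows "ftilde \<nu> r \<ge> 1"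
proof -
  have "(\<Sum>j<1. cc \<nu> j * r ^ j) \<le> (\<Sum>j. cc \<nu> j * r ^ j)"
    using assms cc_pos by (intro sum_le_suminf summable_cc) (auto intro!: mult_nonneg_nonneg cc_nn)
  then show ?thesis by (simp add: ftilde_eq cc0)
qed

lemma sums_b: assumes "0 < \<nu>" "\<nu> \<le> 1"
  shows "(\<lambda>j. cc \<nu> j * r ^ j) sums ftilde \<nu> r"
    "(\<lambda>j. cc \<nu> (Suc j) * r ^ Suc j) sums (ftilde \<nu> r - 1)"
proof -
  show 1: "(\<lambda>j. cc \<nu> j * r ^ j) sums ftilde \<nu> r"
    unfolding ftilde_eq using summable_cc[OF assms] by (simp add: summable_sums)
  show "(\<lambda>j. cc \<nu> (Suc j) * r ^ Suc j) sums (ftilde \<nu> r - 1)"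
    using sums_Suc_iff[of "\<lambda>j. cc \<nu> j * r ^ j" "ftilde \<nu> r - 1"] 1 by (simp add: cc0)
qed

lemma sums_D: assumes "0 < \<nu>" "\<nu> \<le> 1"
  shows "(\<lambda>j. real (Suc j) * (cc \<nu> j * r ^ j)) sums (\<Sum>j. real (Suc j) * (cc \<nu> j * r ^ j))"
    "(\<lambda>j. real (Suc (Suc j)) * (cc \<nu> (Suc j) * r ^ Suc j)) sums ((\<Sum>j. real (Suc j) * (cc \<nu> j * r ^ j)) - 1)"
proof -
  have "summable (\<lambda>j. diffs (ee \<nu>) j * r ^ j)"
    by (intro termdiff_converges_all summable_ee assms)
  then show 1: "(\<lambda>j. real (Suc j) * (cc \<nu> j * r ^ j)) sums (\<Sum>j. real (Suc j) * (cc \<nu> j * r ^ j))"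
    by (simp add: diffs_ee summable_sums mult.assoc)
  show "(\<lambda>j. real (Suc (Suc j)) * (cc \<nu> (Suc j) * r ^ Suc j)) sums ((\<Sum>j. real (Suc j) * (cc \<nu> j * r ^ j)) - 1)"
    using sums_Suc_iff[of "\<lambda>j. real (Suc j) * (cc \<nu> j * r ^ j)"] 1 by (simp add: cc0)
qed

lemma A31: assumes "0 < \<nu>" "\<nu> \<le> 1" "r \<ge> 0"
  shows "(\<Sum>j. real (Suc j) * (cc \<nu> (Suc j) * r ^ Suc j)) \<le> r powr \<nu> * ftilde \<nu> r"
proof (cases "r = 0")
  case True then show ?thesis by simp
next
  case False
  then have r: "r > 0" using assms by simp
  have "summable (\<lambda>j. r * (diffs (cc \<nu>) j * r ^ j))"
    by (intro summable_mult termdiff_converges_all summable_cc assms)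
  then have "(\<lambda>j. real (Suc j) * (cc \<nu> (Suc j) * r ^ Suc j)) sums (\<Sum>j. real (Suc j) * (cc \<nu> (Suc j) * r ^ Suc j))"
    by (simp add: diffs_cc summable_sums mult_ac)
  moreover have "(\<lambda>j. r powr \<nu> * (\<nu> * (cc \<nu> j * r ^ j) + (1-\<nu>) * (cc \<nu> (Suc j) * r ^ Suc j)))
     sums (r powr \<nu> * (\<nu> * ftilde \<nu> r + (1-\<nu>) * (ftilde \<nu> r - 1)))"
    by (intro sums_mult sums_add sums_b assms)
  ultimately have "(\<Sum>j. real (Suc j) * (cc \<nu> (Suc j) * r ^ Suc j)) \<le> r powr \<nu> * (\<nu> * ftilde \<nu> r + (1-\<nu>) * (ftilde \<nu> r - 1))"
    by (rule sums_le[rotated]) (rule T1[OF assms(1,2) r])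
  also have "\<dots> \<le> r powr \<nu> * ftilde \<nu> r"
    using assms by (intro mult_left_mono) (auto simp: algebra_simps)
  finally show ?thesis .
qed

lemma A32: assumes "0 < \<nu>" "\<nu> \<le> 1" "r \<ge> 0"
  shows "r powr \<nu> * ftilde \<nu> r \<le> (\<Sum>j. real (Suc j) * (cc \<nu> j * r ^ j))"
proof (cases "r = 0")
  case True
  have "0 \<le> (\<Sum>j. real (Suc j) * (cc \<nu> j * r ^ j))"
    using sums_D(1)[OF assms(1,2), of r] cc_pos assms by (intro suminf_nonneg) (auto simp: sums_iff intro!: mult_nonneg_nonneg cc_nn)
  then show ?thesis using True by simp
next
  case False
  then have r: "r > 0" using assms by simp
  define D where "D = (\<Sum>j. real (Suc j) * (cc \<nu> j * r ^ j))"
  have "(\<lambda>j. r powr \<nu> * (cc \<nu> j * r ^ j)) sums (r powr \<nu> * ftilde \<nu> r)"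
    by (intro sums_mult sums_b assms)
  moreover have "(\<lambda>j. \<nu> * (real (Suc (Suc j)) * (cc \<nu> (Suc j) * r ^ Suc j)) + (1-\<nu>) * (real (Suc j) * (cc \<nu> j * r ^ j)))
     sums (\<nu> * (D - 1) + (1-\<nu>) * D)"
    unfolding D_def by (intro sums_mult sums_add sums_D assms)
  ultimately have "r powr \<nu> * ftilde \<nu> r \<le> \<nu> * (D - 1) + (1-\<nu>) * D"
    by (rule sums_le[rotated]) (rule T2[OF assms(1,2) r])
  also have "\<dots> \<le> D" using assms by (auto simp: algebra_simps)
  finally show ?thesis by (simp add: D_def)
qed

lemma A4: assumes "0 < \<nu>" "\<nu> \<le> 1" "r \<ge> 0"
  shows "(\<Sum>j. inverse (real (Suc j)) * cc \<nu> j * r ^ Suc j) \<le> r powr (1-\<nu>) * ftilde \<nu> r"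
proof (cases "r = 0")
  case True then show ?thesis by simp
next
  case False
  then have r: "r > 0" using assms by simp
  have "summable (\<lambda>j. FF \<nu> (Suc j) * r ^ Suc j)"
    using summable_FF[OF assms(1,2), of r] by (subst summable_Suc_iff)
  then have "(\<lambda>j. inverse (real (Suc j)) * cc \<nu> j * r ^ Suc j) sums (\<Sum>j. inverse (real (Suc j)) * cc \<nu> j * r ^ Suc j)"
    by (simp add: FF_def summable_sums field_simps)
  moreover have "(\<lambda>j. r powr (1-\<nu>) * (\<nu> * (cc \<nu> (Suc j) * r ^ Suc j) + (1-\<nu>) * (cc \<nu> j * r ^ j)))
     sums (r powr (1-\<nu>) * (\<nu> * (ftilde \<nu> r - 1) + (1-\<nu>) * ftilde \<nu> r))"
    by (intro sums_mult sums_add sums_b assms)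
  ultimately have "(\<Sum>j. inverse (real (Suc j)) * cc \<nu> j * r ^ Suc j) \<le> r powr (1-\<nu>) * (\<nu> * (ftilde \<nu> r - 1) + (1-\<nu>) * ftilde \<nu> r)"
    by (rule sums_le[rotated]) (rule T3[OF assms(1,2) r])
  also have "\<dots> \<le> r powr (1-\<nu>) * ftilde \<nu> r"
    using assms by (intro mult_left_mono) (auto simp: algebra_simps)
  finally show ?thesis .
qed

lemma Fbig_eq2: "Fbig \<nu> r = (\<Sum>j. inverse (real (Suc j)) * cc \<nu> j * r ^ Suc j)"
  by (simp add: Fbig_def cc_def)

lemma deriv_ftilde: assumes "0 < \<nu>" "\<nu> \<le> 1"
  shows "(ftilde \<nu> has_real_derivative (\<Sum>j. real (Suc j) * cc \<nu> (Suc j) * r ^ j)) (at r)"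
    "deriv (ftilde \<nu>) r = (\<Sum>j. real (Suc j) * cc \<nu> (Suc j) * r ^ j)"
  using deriv_powser[of "cc \<nu>" r] summable_cc[OF assms] unfolding ftilde_eq diffs_cc by auto

lemma deriv_Fbig: assumes "0 < \<nu>" "\<nu> \<le> 1"
  shows "(Fbig \<nu> has_real_derivative ftilde \<nu> r) (at r)" "deriv (Fbig \<nu>) r = ftilde \<nu> r"
  using deriv_powser[of "FF \<nu>" r] summable_FF[OF assms] unfolding Fbig_eq[OF assms] diffs_FF ftilde_eq by auto

lemma deriv_rf: assumes "0 < \<nu>" "\<nu> \<le> 1"
  shows "deriv (\<lambda>r. r * ftilde \<nu> r) r = (\<Sum>j. real (Suc j) * (cc \<nu> j * r ^ j))"
  using deriv_powser[of "ee \<nu>" r] summable_ee[OF assms] unfolding rf_eq[OF assms] diffs_ee by (auto simp: mult.assoc)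

lemma Fbig_pos: assumes "0 < \<nu>" "\<nu> \<le> 1" "r > 0" shows "Fbig \<nu> r > 0"
proof -
  have "summable (\<lambda>j. FF \<nu> (Suc j) * r ^ Suc j)"
    using summable_FF[OF assms(1,2), of r] by (subst summable_Suc_iff)
  then have "summable (\<lambda>j. inverse (real (Suc j)) * cc \<nu> j * r ^ Suc j)"
    by (simp add: FF_def field_simps)
  then show ?thesis unfolding Fbig_eq2 using assms cc_pos
    by (intro suminf_pos) auto
qed

lemma A5a: assumes "0 < \<nu>" "\<nu> \<le> 1" "r > 0"
  shows "deriv (ftilde \<nu>) r \<le> r powr (\<nu>-1) * ftilde \<nu> r"
proof -
  have "summable (\<lambda>j. diffs (cc \<nu>) j * r ^ j)"
    by (intro termdiff_converges_all summable_cc assms)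
  then have "r * deriv (ftilde \<nu>) r = (\<Sum>j. real (Suc j) * (cc \<nu> (Suc j) * r ^ Suc j))"
    unfolding deriv_ftilde[OF assms(1,2)] by (subst suminf_mult[symmetric]) (auto simp: diffs_cc mult_ac)
  also have "\<dots> \<le> r powr \<nu> * ftilde \<nu> r" using A31 assms by simp
  also have "\<dots> = r * (r powr (\<nu>-1) * ftilde \<nu> r)"
    using assms by (simp add: powr_diff field_simps)
  finally show ?thesis using assms by simp
qed

lemma A5b: assumes "0 < \<nu>" "\<nu> \<le> 1" "r > 0"
  shows "r powr (\<nu>-1) * Fbig \<nu> r \<le> ftilde \<nu> r"
proof -
  have "r powr (\<nu>-1) * Fbig \<nu> r \<le> r powr (\<nu>-1) * (r powr (1-\<nu>) * ftilde \<nu> r)"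
    unfolding Fbig_eq2 using A4[OF assms(1,2)] assms by (intro mult_left_mono) auto
  also have "\<dots> = ftilde \<nu> r" using assms by (simp add: powr_add[symmetric] mult.assoc[symmetric])
  finally show ?thesis .
qed




lemma cont_ftilde: assumes "0 < \<nu>" "\<nu> \<le> 1" shows "continuous_on S (ftilde \<nu>)"
  using deriv_ftilde(1)[OF assms] by (intro continuous_at_imp_continuous_on ballI DERIV_isCont) blast

lemma cont_Fbig: assumes "0 < \<nu>" "\<nu> \<le> 1" shows "continuous_on S (Fbig \<nu>)"
  using deriv_Fbig(1)[OF assms] by (intro continuous_at_imp_continuous_on ballI DERIV_isCont) blast

lemma cont_E: fixes S :: "real set" assumes "0 < \<nu>" "S \<subseteq> {0..}" shows "continuous_on S (\<lambda>y. exp (- (y powr \<nu>) / \<nu>))"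
proof -
  have "continuous_on S (\<lambda>y. y powr \<nu>)"
    using continuous_on_powr'[of S "\<lambda>y. y" "\<lambda>_. \<nu>"] assms by auto
  then have "continuous_on S (\<lambda>y. - (y powr \<nu>) / \<nu>)"
    using assms by (intro continuous_on_divide continuous_on_minus continuous_on_const) auto
  then show ?thesis by (rule continuous_on_exp)
qed

lemma deriv_E: assumes "y > 0"
  shows "((\<lambda>y. exp (- (y powr \<nu>) / \<nu>)) has_real_derivative exp (- (y powr \<nu>) / \<nu>) * (- (\<nu> * y powr (\<nu> - 1)) / \<nu>)) (at y)"
  by (intro DERIV_fun_exp DERIV_cdivide DERIV_minus has_real_derivative_powr assms)

lemma G_mono: assumes "0 < \<nu>" "\<nu> \<le> 1" "0 \<le> s" "s \<le> t"
  shows "ftilde \<nu> t * exp (- (t powr \<nu>) / \<nu>) \<le> ftilde \<nu> s * exp (- (s powr \<nu>) / \<nu>)"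
proof -
  let ?G = "\<lambda>y. - (ftilde \<nu> y * exp (- (y powr \<nu>) / \<nu>))"
  have "?G s \<le> ?G t"
  proof (rule DERIV_nonneg_imp_increasing_open[OF assms(4)])
    fix y assume y: "s < y" "y < t"
    then have y0: "y > 0" using assms by simp
    define S where "S = (\<Sum>j. real (Suc j) * cc \<nu> (Suc j) * y ^ j)"
    have "(?G has_real_derivative - (S * exp (- (y powr \<nu>) / \<nu>) + (exp (- (y powr \<nu>) / \<nu>) * (- (\<nu> * y powr (\<nu> - 1)) / \<nu>)) * ftilde \<nu> y)) (at y)"
      unfolding S_def
      by (intro DERIV_minus DERIV_mult deriv_ftilde(1)[OF assms(1,2)] deriv_E y0)
    moreover have "0 \<le> - (S * exp (- (y powr \<nu>) / \<nu>) + (exp (- (y powr \<nu>) / \<nu>) * (- (\<nu> * y powr (\<nu> - 1)) / \<nu>)) * ftilde \<nu> y)"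
    proof -
      have "S \<le> y powr (\<nu>-1) * ftilde \<nu> y"
        using A5a[OF assms(1,2) y0] deriv_ftilde(2)[OF assms(1,2)] by (simp add: S_def)
      then have "0 \<le> exp (- (y powr \<nu>) / \<nu>) * (y powr (\<nu>-1) * ftilde \<nu> y - S)" by simp
      then show ?thesis using assms by (simp add: algebra_simps)
    qed
    ultimately show "\<exists>d. (?G has_real_derivative d) (at y) \<and> 0 \<le> d" by blast
  next
    show "continuous_on {s..t} ?G" using assms
      by (intro continuous_intros cont_ftilde cont_E) auto
  qed
  then show ?thesis by simp
qed

lemma H_mono: assumes "0 < \<nu>" "\<nu> \<le> 1" "0 < s" "s \<le> t"
  shows "Fbig \<nu> s * exp (- (s powr \<nu>) / \<nu>) \<le> Fbig \<nu> t * exp (- (t powr \<nu>) / \<nu>)"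
proof (rule DERIV_nonneg_imp_increasing_open[OF assms(4)])
  let ?H = "\<lambda>y. Fbig \<nu> y * exp (- (y powr \<nu>) / \<nu>)"
  fix y assume y: "s < y" "y < t"
  then have y0: "y > 0" using assms by simp
  have "(?H has_real_derivative (ftilde \<nu> y * exp (- (y powr \<nu>) / \<nu>) + (exp (- (y powr \<nu>) / \<nu>) * (- (\<nu> * y powr (\<nu> - 1)) / \<nu>)) * Fbig \<nu> y)) (at y)"
    by (intro DERIV_mult deriv_Fbig(1)[OF assms(1,2)] deriv_E y0)
  moreover have "0 \<le> ftilde \<nu> y * exp (- (y powr \<nu>) / \<nu>) + (exp (- (y powr \<nu>) / \<nu>) * (- (\<nu> * y powr (\<nu> - 1)) / \<nu>)) * Fbig \<nu> y"
  proof -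
    have "y powr (\<nu>-1) * Fbig \<nu> y \<le> ftilde \<nu> y" using A5b[OF assms(1,2) y0] .
    then have "0 \<le> exp (- (y powr \<nu>) / \<nu>) * (ftilde \<nu> y - y powr (\<nu>-1) * Fbig \<nu> y)" by simp
    then show ?thesis using assms by (simp add: algebra_simps)
  qed
  ultimately show "\<exists>d. (?H has_real_derivative d) (at y) \<and> 0 \<le> d" by blast
next
  show "continuous_on {s..t} (\<lambda>y. Fbig \<nu> y * exp (- (y powr \<nu>) / \<nu>))" using assms
    by (intro continuous_intros cont_Fbig cont_E) auto
qed

lemma ftilde0: "ftilde \<nu> 0 = 1"
  unfolding ftilde_eq using powser_zero[of "cc \<nu>"] by (simp add: cc0)

lemma A7up: assumes "0 < \<nu>" "\<nu> \<le> 1" "0 \<le> r"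
  shows "ftilde \<nu> r \<le> exp (r powr \<nu> / \<nu>)"
proof -
  have "ftilde \<nu> r * exp (- (r powr \<nu>) / \<nu>) \<le> 1"
    using G_mono[OF assms(1,2) order_refl assms(3)] by (simp add: ftilde0)
  then have "ftilde \<nu> r * exp (- (r powr \<nu>) / \<nu>) * exp (r powr \<nu> / \<nu>) \<le> 1 * exp (r powr \<nu> / \<nu>)"
    by (rule mult_right_mono) simp
  also have "ftilde \<nu> r * exp (- (r powr \<nu>) / \<nu>) * exp (r powr \<nu> / \<nu>) = ftilde \<nu> r"
    by (simp only: mult.assoc exp_add[symmetric]) simp
  finally show ?thesis by simp
qed

lemma A7low: assumes "0 < \<nu>" "\<nu> \<le> 1" "0 \<le> r" "a > 0"
  shows "Fbig \<nu> a * max r a powr (\<nu>-1) * exp ((r powr \<nu> - a powr \<nu>) / \<nu>) \<le> ftilde \<nu> r"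
proof (cases "a \<le> r")
  case True
  then have r0: "r > 0" using assms by simp
  have "Fbig \<nu> a * exp (- (a powr \<nu>) / \<nu>) \<le> Fbig \<nu> r * exp (- (r powr \<nu>) / \<nu>)"
    by (rule H_mono[OF assms(1,2,4) True])
  then have ineq: "Fbig \<nu> a * exp (- (a powr \<nu>) / \<nu>) * exp (r powr \<nu> / \<nu>) \<le> Fbig \<nu> r * exp (- (r powr \<nu>) / \<nu>) * exp (r powr \<nu> / \<nu>)"
    by (rule mult_right_mono) simp
  have eq1: "Fbig \<nu> a * exp (- (a powr \<nu>) / \<nu>) * exp (r powr \<nu> / \<nu>) = Fbig \<nu> a * exp ((r powr \<nu> - a powr \<nu>) / \<nu>)"
    by (simp only: mult.assoc exp_add[symmetric]) (simp add: diff_divide_distrib)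
  have eq2: "Fbig \<nu> r * exp (- (r powr \<nu>) / \<nu>) * exp (r powr \<nu> / \<nu>) = Fbig \<nu> r"
    by (simp only: mult.assoc exp_add[symmetric]) simp
  have "Fbig \<nu> a * exp ((r powr \<nu> - a powr \<nu>) / \<nu>) \<le> Fbig \<nu> r"
    using ineq unfolding eq1 eq2 .
  then have "r powr (\<nu>-1) * (Fbig \<nu> a * exp ((r powr \<nu> - a powr \<nu>) / \<nu>)) \<le> r powr (\<nu>-1) * Fbig \<nu> r"
    by (rule mult_left_mono) simp
  also have "\<dots> \<le> ftilde \<nu> r" by (rule A5b[OF assms(1,2) r0])
  finally show ?thesis using True by (simp add: max_def mult_ac)
next
  case False
  have "a powr (\<nu>-1) * Fbig \<nu> a \<le> ftilde \<nu> a" by (rule A5b[OF assms(1,2,4)])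
  then have "a powr (\<nu>-1) * Fbig \<nu> a * exp ((r powr \<nu> - a powr \<nu>) / \<nu>) \<le> ftilde \<nu> a * exp ((r powr \<nu> - a powr \<nu>) / \<nu>)"
    by (rule mult_right_mono) simp
  also have "ftilde \<nu> a * exp ((r powr \<nu> - a powr \<nu>) / \<nu>) = (ftilde \<nu> a * exp (- (a powr \<nu>) / \<nu>)) * exp (r powr \<nu> / \<nu>)"
    by (simp only: mult.assoc exp_add[symmetric]) (simp add: diff_divide_distrib)
  also have "\<dots> \<le> (ftilde \<nu> r * exp (- (r powr \<nu>) / \<nu>)) * exp (r powr \<nu> / \<nu>)"
    using False by (intro mult_right_mono G_mono assms) auto
  also have "\<dots> = ftilde \<nu> r" by (simp only: mult.assoc exp_add[symmetric]) simp
  finally show ?thesis using False by (simp add: max_def mult_ac)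
qed




definition aa :: "real \<Rightarrow> nat \<Rightarrow> real" where "aa x j = x ^ j / fact j"
definition md :: "real \<Rightarrow> nat" where "md x = nat \<lfloor>x\<rfloor>"
definition rho :: "real \<Rightarrow> nat \<Rightarrow> real" where "rho x j = aa x j / aa x (md x)"

lemma md_bounds: assumes "x \<ge> 1" shows "real (md x) \<le> x" "x < real (md x) + 1" "md x \<ge> 1"
  using assms unfolding md_def by linarith+

lemma aa_pos: "x > 0 \<Longrightarrow> aa x j > 0" by (simp add: aa_def)
lemma rho_pos: "x > 0 \<Longrightarrow> rho x j > 0" by (simp add: rho_def aa_pos)
lemma rho_md: "x > 0 \<Longrightarrow> rho x (md x) = 1" using aa_pos[of x "md x"] by (simp add: rho_def)
lemma rho_Suc: "x > 0 \<Longrightarrow> rho x (Suc j) = rho x j * (x / real (Suc j))"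
  by (simp add: rho_def aa_def field_simps)

lemma inv_le_exp1: fixes u :: real assumes "u \<ge> 0" shows "1 / (1 + u) \<le> exp (- u + u^2)"
proof -
  define v where "v = u / (1 + u)"
  have "1 - v \<le> exp (- v)" using exp_ge_add_one_self[of "-v"] by simp
  moreover have "1 - v = 1 / (1 + u)" using assms by (simp add: v_def field_simps)
  moreover have "-u + u^2 \<ge> - v"
  proof -
    have "v \<ge> u - u^2" using assms by (simp add: v_def field_simps power2_eq_square mult_nonneg_nonneg)
    then show ?thesis by simp
  qed
  ultimately show ?thesis by (metis exp_le_cancel_iff order_trans)
qed

lemma inv_le_exp2: fixes v :: real assumes "v \<ge> 0" "v \<le> 1" shows "1 / (1 + v) \<le> exp (- v / 2)"
proof -
  have "1 - v/2 \<le> exp (- v/2)" using exp_ge_add_one_self[of "-v/2"] by simp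
  moreover have "1 / (1 + v) \<le> 1 - v/2"
    using assms by (simp add: field_simps power2_eq_square) (smt (verit) mult_left_le mult_nonneg_nonneg)
  ultimately show ?thesis by simp
qed

lemma one_plus_le_exp: "1 + u \<le> exp u" for u :: real using exp_ge_add_one_self[of u] by simp

context
  fixes x :: real
  assumes x1: "x \<ge> 1"
begin

private lemma x0: "x > 0" using x1 by simp

lemma rho_up_le1: "rho x (md x + k) \<le> 1"
proof (induction k)
  case 0 then show ?case using rho_md[OF x0] by simp
next
  case (Suc k)
  have "x / real (Suc (md x + k)) \<le> 1" using md_bounds[OF x1] by (simp add: field_simps)
  moreover have "0 \<le> x / real (Suc (md x + k))" using x0 by simp
  ultimately have "rho x (md x + k) * (x / real (Suc (md x + k))) \<le> 1 * 1"
    using Suc rho_pos[OF x0] by (intro mult_mono) (auto simp: less_imp_le)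
  then show ?case using rho_Suc[OF x0] by simp
qed

lemma rho_down_rec: assumes "Suc l \<le> md x"
  shows "rho x (md x - Suc l) = rho x (md x - l) * ((real (md x) - real l) / x)"
proof -
  have e: "md x - l = Suc (md x - Suc l)" using assms by simp
  show ?thesis unfolding e using rho_Suc[OF x0, of "md x - Suc l"] x0 assms
    by (simp add: field_simps of_nat_diff)
qed

lemma rho_down_le1: "l \<le> md x \<Longrightarrow> rho x (md x - l) \<le> 1"
proof (induction l)
  case 0 then show ?case using rho_md[OF x0] by simp
next
  case (Suc l)
  have "(real (md x) - real l) / x \<le> 1" "0 \<le> (real (md x) - real l) / x"
    using md_bounds[OF x1] Suc.prems x0 by (auto simp: field_simps)
  then have "rho x (md x - l) * ((real (md x) - real l) / x) \<le> 1 * 1"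
    using Suc rho_pos[OF x0] by (intro mult_mono) (auto simp: less_imp_le)
  then show ?case using rho_down_rec[OF Suc.prems] by simp
qed

lemma rho_le1: "rho x j \<le> 1"
proof (cases "md x \<le> j")
  case True
  then have "j = md x + (j - md x)" by simp
  then show ?thesis using rho_up_le1 by metis
next
  case False
  then have "j = md x - (md x - j)" by simp
  then show ?thesis using rho_down_le1[of "md x - j"] by (metis diff_le_self)
qed

lemma rho_up_lower: "rho x (md x + k) \<ge> exp (- (real k * (real k + 1)) / (2 * x))"
proof (induction k)
  case 0 then show ?case using rho_md[OF x0] by simp
next
  case (Suc k)
  have f: "x / real (Suc (md x + k)) \<ge> exp (- (real k + 1) / x)"
  proof -
    have "real (Suc (md x + k)) \<le> x + real k + 1" using md_bounds[OF x1] by simp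
    also have "\<dots> = x * (1 + (real k + 1) / x)" using x0 by (simp add: field_simps)
    also have "\<dots> \<le> x * exp ((real k + 1) / x)" using x0 one_plus_le_exp by (intro mult_left_mono) auto
    finally have N: "real (Suc (md x + k)) \<le> x * exp ((real k + 1) / x)" .
    define t where "t = (real k + 1) / x"
    have "exp (- t) * real (Suc (md x + k)) \<le> exp (- t) * (x * exp t)"
      using N by (intro mult_left_mono) (auto simp: t_def)
    also have "\<dots> = x" by (simp add: exp_minus field_simps)
    finally have "exp (- t) * real (Suc (md x + k)) \<le> x" .
    then have "exp (- t) \<le> x / real (Suc (md x + k))" by (subst pos_le_divide_eq) auto
    then show ?thesis unfolding t_def minus_divide_left .
  qed
  have "exp (- (real (Suc k) * (real (Suc k) + 1)) / (2 * x)) = exp (- (real k * (real k + 1)) / (2 * x)) * exp (- (real k + 1) / x)"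
    using x0 by (simp add: exp_add[symmetric] field_simps)
  also have "\<dots> \<le> rho x (md x + k) * (x / real (Suc (md x + k)))"
    using Suc f rho_pos[OF x0] by (intro mult_mono) (auto simp: less_imp_le)
  also have "\<dots> = rho x (md x + Suc k)" using rho_Suc[OF x0] by simp
  finally show ?case .
qed

lemma rho_up_upper: "rho x (md x + k) \<le> exp (- (real k * (real k - 1)) / (2 * x) + real k ^ 3 / x^2)"
proof (induction k)
  case 0 then show ?case using rho_md[OF x0] by simp
next
  case (Suc k)
  have f: "x / real (Suc (md x + k)) \<le> exp (- (real k / x) + (real k / x)^2)"
  proof -
    have "x + real k \<le> real (Suc (md x + k))" using md_bounds[OF x1] by simp
    then have "x / real (Suc (md x + k)) \<le> x / (x + real k)" using x0 by (intro divide_left_mono) auto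
    also have "\<dots> = 1 / (1 + real k / x)" using x0 by (simp add: field_simps)
    also have "\<dots> \<le> exp (- (real k / x) + (real k / x)^2)" by (rule inv_le_exp1) (use x0 in auto)
    finally show ?thesis .
  qed
  have "rho x (md x + Suc k) = rho x (md x + k) * (x / real (Suc (md x + k)))" using rho_Suc[OF x0] by simp
  also have "\<dots> \<le> exp (- (real k * (real k - 1)) / (2 * x) + real k ^ 3 / x^2) * exp (- (real k / x) + (real k / x)^2)"
    using Suc f rho_pos[OF x0] x0 by (intro mult_mono) (auto simp: less_imp_le)
  also have "\<dots> = exp (- (real k * (real k - 1)) / (2 * x) + real k ^ 3 / x^2 - (real k / x) + (real k / x)^2)"
    by (simp add: exp_add[symmetric])
  also have "\<dots> \<le> exp (- (real (Suc k) * (real (Suc k) - 1)) / (2 * x) + real (Suc k) ^ 3 / x^2)"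
  proof -
    have "real k ^ 3 + real k ^ 2 \<le> (real k + 1) ^ 3" by (simp add: power2_eq_square power3_eq_cube algebra_simps)
    then have "real k ^ 3 / x^2 + (real k / x)^2 \<le> (real k + 1) ^ 3 / x^2"
      using x0 by (simp add: power_divide add_divide_distrib[symmetric] divide_right_mono)
    then have A: "real k ^ 3 / x^2 + (real k / x)^2 \<le> real (Suc k) ^ 3 / x^2" by (simp add: add.commute)
    have B: "- (real k * (real k - 1)) / (2 * x) - (real k / x) = - (real (Suc k) * (real (Suc k) - 1)) / (2 * x)"
      using x0 by (simp add: field_simps)
    show ?thesis unfolding exp_le_cancel_iff using A B by linarith
  qed
  finally show ?case .
qed

lemma rho_down_upper: "l \<le> md x \<Longrightarrow> rho x (md x - l) \<le> exp (- (real l * (real l - 1)) / (2 * x))"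
proof (induction l)
  case 0 then show ?case using rho_md[OF x0] by simp
next
  case (Suc l)
  have f: "(real (md x) - real l) / x \<le> exp (- real l / x)"
  proof -
    have "(real (md x) - real l) / x \<le> (x - real l) / x" using md_bounds[OF x1] x0 by (intro divide_right_mono) auto
    also have "\<dots> = 1 + (- real l / x)" using x0 by (simp add: field_simps)
    also have "\<dots> \<le> exp (- real l / x)" by (rule one_plus_le_exp)
    finally show ?thesis .
  qed
  have "0 \<le> (real (md x) - real l) / x" using Suc.prems x0 by auto
  then have "rho x (md x - Suc l) \<le> exp (- (real l * (real l - 1)) / (2 * x)) * exp (- real l / x)"
    unfolding rho_down_rec[OF Suc.prems] using Suc f rho_pos[OF x0] by (intro mult_mono) (auto simp: less_imp_le)
  also have "\<dots> = exp (- (real (Suc l) * (real (Suc l) - 1)) / (2 * x))"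
    using x0 by (simp add: exp_add[symmetric] field_simps)
  finally show ?case .
qed

lemma rho_down_lower: "2 * real l \<le> x \<Longrightarrow> rho x (md x - l) \<ge> exp (- (real l * (real l + 1)) / (2 * x) - 2 * real l ^ 3 / x^2)"
proof (induction l)
  case 0 then show ?case using rho_md[OF x0] by simp
next
  case (Suc l)
  have lm: "Suc l \<le> md x" using Suc.prems md_bounds[OF x1] by simp
  define w where "w = (real l + 1) / x"
  have w: "0 \<le> w" "w \<le> 1/2" using Suc.prems x0 by (auto simp: w_def field_simps)
  have f: "exp (- w - 2 * w^2) \<le> (real (md x) - real l) / x"
  proof -
    have "exp (- w - 2 * w^2) \<le> exp (ln (1 - w))" using ln_one_minus_pos_lower_bound[OF w] by simp
    also have "\<dots> = 1 - w" using w by simp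
    also have "\<dots> = (x - real l - 1) / x" using x0 unfolding w_def by (simp add: field_simps)
    also have "\<dots> \<le> (real (md x) - real l) / x" using md_bounds[OF x1] x0 by (intro divide_right_mono) auto
    finally show ?thesis .
  qed
  have "exp (- (real (Suc l) * (real (Suc l) + 1)) / (2 * x) - 2 * real (Suc l) ^ 3 / x^2)
     \<le> exp (- (real l * (real l + 1)) / (2 * x) - 2 * real l ^ 3 / x^2 + (- w - 2 * w^2))"
  proof -
    have "real l ^ 3 + (real l + 1)^2 \<le> (real l + 1) ^ 3" by (simp add: power2_eq_square power3_eq_cube algebra_simps)
    then have "2 * real l ^ 3 / x^2 + 2 * w^2 \<le> 2 * (real l + 1) ^ 3 / x^2"
      using x0 by (simp add: w_def power_divide add_divide_distrib[symmetric] divide_right_mono)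
    then have A: "2 * real l ^ 3 / x^2 + 2 * w^2 \<le> 2 * real (Suc l) ^ 3 / x^2" by (simp add: add.commute)
    have "- (real l * (real l + 1)) / (2 * x) - (real l + 1) / x = - (real (Suc l) * (real (Suc l) + 1)) / (2 * x)"
      using x0 by (simp add: field_simps)
    then have B: "- (real l * (real l + 1)) / (2 * x) - w = - (real (Suc l) * (real (Suc l) + 1)) / (2 * x)"
      unfolding w_def .
    show ?thesis unfolding exp_le_cancel_iff using A B by linarith
  qed
  also have "\<dots> = exp (- (real l * (real l + 1)) / (2 * x) - 2 * real l ^ 3 / x^2) * exp (- w - 2 * w^2)"
    by (simp add: exp_add[symmetric])
  also have "\<dots> \<le> rho x (md x - l) * ((real (md x) - real l) / x)"
    using Suc f rho_pos[OF x0] by (intro mult_mono) (auto simp: less_imp_le)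
  also have "\<dots> = rho x (md x - Suc l)" using rho_down_rec[OF lm] by simp
  finally show ?case .
qed

lemma rho_up_dom: "rho x (md x + k) \<le> exp (- (real k - 1 - sqrt x) / (2 * sqrt x))"
proof (induction k)
  case 0
  have "0 \<le> (sqrt x + 1) / (2 * sqrt x)" using x0 by (intro divide_nonneg_pos) auto
  then show ?case using rho_md[OF x0] by simp
next
  case (Suc k)
  show ?case
  proof (cases "real k \<ge> sqrt x")
    case True
    have sx: "sqrt x > 0" "sqrt x * sqrt x = x" using x0 by auto
    have f: "x / real (Suc (md x + k)) \<le> exp (- (1 / sqrt x) / 2)"
    proof -
      have "x + sqrt x \<le> real (Suc (md x + k))" using md_bounds[OF x1] True by simp
      moreover have "0 < x + sqrt x" using x0 by (intro add_pos_nonneg) auto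
      ultimately have "x / real (Suc (md x + k)) \<le> x / (x + sqrt x)" using x0 by (intro divide_left_mono) auto
      also have "\<dots> = 1 / (1 + 1 / sqrt x)"
      proof -
        define s where "s = sqrt x"
        have a: "s > 0" "x = s * s" using sx by (auto simp: s_def)
        have "s + s * s > 0" using a by (intro add_pos_pos mult_pos_pos)
        then show ?thesis unfolding s_def[symmetric] using a by (simp add: field_simps)
      qed
      also have "\<dots> \<le> exp (- (1 / sqrt x) / 2)" using x1 sx by (intro inv_le_exp2) auto
      finally show ?thesis .
    qed
    have "rho x (md x + Suc k) = rho x (md x + k) * (x / real (Suc (md x + k)))" using rho_Suc[OF x0] by simp
    also have "\<dots> \<le> exp (- (real k - 1 - sqrt x) / (2 * sqrt x)) * exp (- (1 / sqrt x) / 2)"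
      using Suc f rho_pos[OF x0] x0 by (intro mult_mono) (auto simp: less_imp_le)
    also have "\<dots> = exp (- (real (Suc k) - 1 - sqrt x) / (2 * sqrt x))"
      using sx by (simp add: exp_add[symmetric] field_simps)
    finally show ?thesis .
  next
    case False
    have "0 \<le> - (real (Suc k) - 1 - sqrt x) / (2 * sqrt x)" using False x0 by (simp add: divide_nonpos_pos)
    then have "1 \<le> exp (- (real (Suc k) - 1 - sqrt x) / (2 * sqrt x))" by simp
    then show ?thesis using rho_le1[of "md x + Suc k"] by linarith
  qed
qed

end




definition TT :: "real \<Rightarrow> real \<Rightarrow> real" where "TT q x = (\<Sum>j. rho x j powr q)"

definition gg :: "real \<Rightarrow> real \<Rightarrow> real \<Rightarrow> real" where
 "gg q x t = (let k = int (md x) + \<lfloor>t * sqrt x\<rfloor> in if 0 \<le> k then rho x (nat k) powr q else 0)"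

lemma gg_meas[measurable]: "gg q x \<in> borel_measurable borel"
proof -
  define H where "H = (\<lambda>i. if 0 \<le> int (md x) + i then rho x (nat (int (md x) + i)) powr q else 0)"
  have "gg q x = (\<lambda>t. H \<lfloor>t * sqrt x\<rfloor>)" by (simp add: gg_def H_def Let_def fun_eq_iff)
  moreover have "(\<lambda>t. H \<lfloor>t * sqrt x\<rfloor>) \<in> borel_measurable borel" by measurable
  ultimately show ?thesis by simp
qed

lemma gg_nonneg: "gg q x t \<ge> 0" by (simp add: gg_def Let_def)

lemma summable_rho: assumes "x > 0" shows "summable (\<lambda>j. rho x j)"
proof -
  have "summable (\<lambda>j. inverse (fact j) * x ^ j / aa x (md x))"
    by (intro summable_divide summable_exp)
  then show ?thesis by (simp add: rho_def aa_def field_simps)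
qed

lemma summable_rho_powr: assumes "x \<ge> 1" "q \<ge> 1" shows "summable (\<lambda>j. rho x j powr q)"
proof (rule summable_comparison_test[OF _ summable_rho])
  show "\<exists>N. \<forall>n\<ge>N. norm (rho x n powr q) \<le> rho x n"
  proof (intro exI allI impI)
    fix n
    have "rho x n powr q \<le> rho x n powr 1"
      using rho_pos[of x n] rho_le1[OF assms(1), of n] assms by (intro powr_mono') auto
    then show "norm (rho x n powr q) \<le> rho x n" using rho_pos[of x n] assms by simp
  qed
qed (use assms in auto)

definition II :: "real \<Rightarrow> nat \<Rightarrow> real set" where
  "II x j = {(real j - real (md x)) / sqrt x ..< (real j - real (md x) + 1) / sqrt x}"

lemma II_iff: assumes "x > 0" shows "t \<in> II x j \<longleftrightarrow> \<lfloor>t * sqrt x\<rfloor> = int j - int (md x)"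
proof -
  have s: "sqrt x > 0" using assms by simp
  have "t \<in> II x j \<longleftrightarrow> real j - real (md x) \<le> t * sqrt x \<and> t * sqrt x < real j - real (md x) + 1"
    unfolding II_def using s by (simp add: field_simps)
  also have "\<dots> \<longleftrightarrow> \<lfloor>t * sqrt x\<rfloor> = int j - int (md x)"
    by (simp add: floor_eq_iff)
  finally show ?thesis .
qed

lemma gg_sum: assumes "x > 0"
  shows "ennreal (gg q x t) = (\<Sum>j. ennreal (rho x j powr q) * indicator (II x j) t)"
proof (cases "0 \<le> int (md x) + \<lfloor>t * sqrt x\<rfloor>")
  case True
  define j0 where "j0 = nat (int (md x) + \<lfloor>t * sqrt x\<rfloor>)"
  have "(\<lambda>j. ennreal (rho x j powr q) * indicator (II x j) t) = (\<lambda>j. if j = j0 then ennreal (rho x j powr q) else 0)"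
    using True by (auto simp: fun_eq_iff II_iff[OF assms] j0_def split: split_indicator)
  then have "(\<Sum>j. ennreal (rho x j powr q) * indicator (II x j) t) = ennreal (rho x j0 powr q)"
    using sums_single[of j0 "\<lambda>j. ennreal (rho x j powr q)"] by (simp add: sums_iff)
  then show ?thesis using True by (simp add: gg_def Let_def j0_def)
next
  case False
  have "(\<lambda>j. ennreal (rho x j powr q) * indicator (II x j) t) = (\<lambda>j. 0)"
    using False by (auto simp: fun_eq_iff II_iff[OF assms] split: split_indicator)
  then show ?thesis using False by (simp add: gg_def Let_def)
qed

lemma gg_integral: assumes "x \<ge> 1" "q \<ge> 1"
  shows "has_bochner_integral lborel (gg q x) (TT q x / sqrt x)"
proof (rule has_bochner_integral_nn_integral)
  have x0: "x > 0" using assms by simp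
  have "(\<integral>\<^sup>+ t. ennreal (gg q x t) \<partial>lborel) = (\<integral>\<^sup>+ t. (\<Sum>j. ennreal (rho x j powr q) * indicator (II x j) t) \<partial>lborel)"
    using gg_sum[OF x0] by simp
  also have "\<dots> = (\<Sum>j. \<integral>\<^sup>+ t. ennreal (rho x j powr q) * indicator (II x j) t \<partial>lborel)"
    by (rule nn_integral_suminf) (simp add: II_def)
  also have "\<dots> = (\<Sum>j. ennreal (rho x j powr q) * emeasure lborel (II x j))"
    by (subst nn_integral_cmult_indicator) (auto simp: II_def)
  also have "\<dots> = (\<Sum>j. ennreal (rho x j powr q / sqrt x))"
  proof -
    have "emeasure lborel (II x j) = ennreal (1 / sqrt x)" for j
      unfolding II_def using x0 by (subst emeasure_lborel_Ico) (auto simp: field_simps)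
    then show ?thesis using x0 by (simp add: ennreal_mult'[symmetric] divide_inverse)
  qed
  also have "\<dots> = ennreal (\<Sum>j. rho x j powr q / sqrt x)"
    using summable_rho_powr[OF assms] x0 by (intro suminf_ennreal2 summable_divide) (auto intro!: divide_nonneg_nonneg)
  also have "\<dots> = ennreal (TT q x / sqrt x)"
    using summable_rho_powr[OF assms] by (simp add: TT_def suminf_divide)
  finally show "(\<integral>\<^sup>+ t. ennreal (gg q x t) \<partial>lborel) = ennreal (TT q x / sqrt x)" .
  show "TT q x / sqrt x \<ge> 0" using assms unfolding TT_def
    using summable_rho_powr[OF assms] x0 by (intro divide_nonneg_nonneg suminf_nonneg) auto
qed (auto simp: gg_meas gg_nonneg)




lemma inv_sqrt_lim: "((\<lambda>x::real. 1 / sqrt x) \<longlongrightarrow> 0) at_top" by real_asymp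

lemma lim_helper:
  fixes u :: "real \<Rightarrow> real"
  assumes "((\<lambda>x. u x / sqrt x) \<longlongrightarrow> s) at_top"
  shows "((\<lambda>x. exp (- (u x * (u x + c)) / (2 * x) + d * u x ^ 3 / x^2)) \<longlongrightarrow> exp (- (s^2) / 2)) at_top"
proof -
  have "((\<lambda>x. exp (- ((u x / sqrt x)^2 + c * (u x / sqrt x) * (1 / sqrt x)) / 2 + d * (u x / sqrt x)^3 * (1 / sqrt x)))
      \<longlongrightarrow> exp (- (s^2 + c * s * 0) / 2 + d * s^3 * 0)) at_top"
    by (intro tendsto_intros assms inv_sqrt_lim) auto
  then have 1: "((\<lambda>x. exp (- ((u x / sqrt x)^2 + c * (u x / sqrt x) * (1 / sqrt x)) / 2 + d * (u x / sqrt x)^3 * (1 / sqrt x)))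
      \<longlongrightarrow> exp (- (s^2) / 2)) at_top" by simp
  have "eventually (\<lambda>x. exp (- ((u x / sqrt x)^2 + c * (u x / sqrt x) * (1 / sqrt x)) / 2 + d * (u x / sqrt x)^3 * (1 / sqrt x))
     = exp (- (u x * (u x + c)) / (2 * x) + d * u x ^ 3 / x^2)) at_top"
    using eventually_gt_at_top[of 0]
  proof eventually_elim
    case (elim x)
    define r where "r = sqrt x"
    have r: "r > 0" "x = r * r" using elim by (auto simp: r_def)
    show ?case unfolding r_def[symmetric] using r
      by (simp add: field_simps power2_eq_square power3_eq_cube)
  qed
  from tendsto_cong[OF this] 1 show ?thesis by simp
qed

lemma fl: fixes y :: real shows "of_int \<lfloor>y\<rfloor> \<le> y" "y - 1 < of_int \<lfloor>y\<rfloor>"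
  using floor_correct[of y] by auto

lemma K_lim: assumes "t \<ge> 0" shows "((\<lambda>x. real (nat \<lfloor>t * sqrt x\<rfloor>) / sqrt x) \<longlongrightarrow> t) at_top"
proof (rule tendsto_sandwich[of "\<lambda>x. t - 1 / sqrt x" _ _ "\<lambda>x. t"])
  show "\<forall>\<^sub>F x in at_top. t - 1 / sqrt x \<le> real (nat \<lfloor>t * sqrt x\<rfloor>) / sqrt x"
    using eventually_gt_at_top[of 0]
  proof eventually_elim
    case (elim x)
    have s: "sqrt x > 0" using elim by simp
    have "t * sqrt x - 1 \<le> real (nat \<lfloor>t * sqrt x\<rfloor>)" using assms s fl[of "t * sqrt x"]
      by (simp add: of_nat_nat; linarith)
    then have "(t * sqrt x - 1) / sqrt x \<le> real (nat \<lfloor>t * sqrt x\<rfloor>) / sqrt x"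
      using s by (intro divide_right_mono) auto
    then show ?case using s by (simp add: field_simps)
  qed
  show "\<forall>\<^sub>F x in at_top. real (nat \<lfloor>t * sqrt x\<rfloor>) / sqrt x \<le> t"
    using eventually_gt_at_top[of 0]
  proof eventually_elim
    case (elim x)
    have s: "sqrt x > 0" using elim by simp
    have "real (nat \<lfloor>t * sqrt x\<rfloor>) \<le> t * sqrt x" using assms s by (simp add: of_nat_nat)
    then have "real (nat \<lfloor>t * sqrt x\<rfloor>) / sqrt x \<le> t * sqrt x / sqrt x"
      using s by (intro divide_right_mono) auto
    then show ?case using s by simp
  qed
  show "((\<lambda>x. t - 1 / sqrt x) \<longlongrightarrow> t) at_top"
    using tendsto_diff[OF tendsto_const[of t] inv_sqrt_lim] by simp
qed auto

lemma L_lim: assumes "t < 0" shows "((\<lambda>x. real (nat (- \<lfloor>t * sqrt x\<rfloor>)) / sqrt x) \<longlongrightarrow> - t) at_top"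
proof (rule tendsto_sandwich[of "\<lambda>x. - t" _ _ "\<lambda>x. - t + 1 / sqrt x"])
  show "\<forall>\<^sub>F x in at_top. - t \<le> real (nat (- \<lfloor>t * sqrt x\<rfloor>)) / sqrt x"
    using eventually_gt_at_top[of 0]
  proof eventually_elim
    case (elim x)
    have s: "sqrt x > 0" using elim by simp
    have "- t * sqrt x \<le> real (nat (- \<lfloor>t * sqrt x\<rfloor>))" using assms s fl[of "t * sqrt x"]
      by (simp add: of_nat_nat; linarith)
    then have "(- t * sqrt x) / sqrt x \<le> real (nat (- \<lfloor>t * sqrt x\<rfloor>)) / sqrt x"
      using s by (intro divide_right_mono) auto
    then show ?case using s by simp
  qed
  show "\<forall>\<^sub>F x in at_top. real (nat (- \<lfloor>t * sqrt x\<rfloor>)) / sqrt x \<le> - t + 1 / sqrt x"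
    using eventually_gt_at_top[of 0]
  proof eventually_elim
    case (elim x)
    have s: "sqrt x > 0" using elim by simp
    have "t * sqrt x < 0" using assms s by (simp add: mult_neg_pos)
    then have "\<lfloor>t * sqrt x\<rfloor> \<le> 0" by simp
    then have "real (nat (- \<lfloor>t * sqrt x\<rfloor>)) = - of_int \<lfloor>t * sqrt x\<rfloor>" by simp
    then have "real (nat (- \<lfloor>t * sqrt x\<rfloor>)) \<le> - t * sqrt x + 1" using fl[of "t * sqrt x"] by linarith
    then have "real (nat (- \<lfloor>t * sqrt x\<rfloor>)) / sqrt x \<le> (- t * sqrt x + 1) / sqrt x"
      using s by (intro divide_right_mono) auto
    then show ?case using s by (simp add: field_simps)
  qed
  show "((\<lambda>x. - t + 1 / sqrt x) \<longlongrightarrow> - t) at_top"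
    using tendsto_add[OF tendsto_const[of "-t"] inv_sqrt_lim] by simp
qed auto

lemma gg_lim: "((\<lambda>x. gg q x t) \<longlongrightarrow> exp (- (t^2) / 2) powr q) at_top"
proof (cases "t \<ge> 0")
  case True
  define K where "K = (\<lambda>x. nat \<lfloor>t * sqrt x\<rfloor>)"
  have Kl: "((\<lambda>x. real (K x) / sqrt x) \<longlongrightarrow> t) at_top" unfolding K_def by (rule K_lim[OF True])
  have l1: "((\<lambda>x. exp (- (real (K x) * (real (K x) + 1)) / (2 * x))) \<longlongrightarrow> exp (- (t^2) / 2)) at_top"
    using lim_helper[OF Kl, of 1 0] by simp
  have l2: "((\<lambda>x. exp (- (real (K x) * (real (K x) - 1)) / (2 * x) + real (K x) ^ 3 / x^2)) \<longlongrightarrow> exp (- (t^2) / 2)) at_top"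
    using lim_helper[OF Kl, of "-1" 1] by simp
  have "((\<lambda>x. rho x (md x + K x)) \<longlongrightarrow> exp (- (t^2) / 2)) at_top"
  proof (rule tendsto_sandwich[OF _ _ l1 l2])
    show "\<forall>\<^sub>F x in at_top. exp (- (real (K x) * (real (K x) + 1)) / (2 * x)) \<le> rho x (md x + K x)"
      using eventually_ge_at_top[of 1] by eventually_elim (rule rho_up_lower)
    show "\<forall>\<^sub>F x in at_top. rho x (md x + K x) \<le> exp (- (real (K x) * (real (K x) - 1)) / (2 * x) + real (K x) ^ 3 / x^2)"
      using eventually_ge_at_top[of 1] by eventually_elim (rule rho_up_upper)
  qed
  then have "((\<lambda>x. rho x (md x + K x) powr q) \<longlongrightarrow> exp (- (t^2) / 2) powr q) at_top"
    by (intro tendsto_powr) auto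
  moreover have "eventually (\<lambda>x. rho x (md x + K x) powr q = gg q x t) at_top"
    using eventually_ge_at_top[of 1]
  proof eventually_elim
    case (elim x)
    have "\<lfloor>t * sqrt x\<rfloor> \<ge> 0" using True elim by simp
    then show ?case by (simp add: gg_def K_def Let_def nat_add_distrib)
  qed
  ultimately show ?thesis using tendsto_cong by fastforce
next
  case False
  then have t: "t < 0" by simp
  define L where "L = (\<lambda>x. nat (- \<lfloor>t * sqrt x\<rfloor>))"
  have Ll: "((\<lambda>x. real (L x) / sqrt x) \<longlongrightarrow> - t) at_top" unfolding L_def by (rule L_lim[OF t])
  have l1: "((\<lambda>x. exp (- (real (L x) * (real (L x) + 1)) / (2 * x) - 2 * real (L x) ^ 3 / x^2)) \<longlongrightarrow> exp (- (t^2) / 2)) at_top"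
    using lim_helper[OF Ll, of 1 "-2"] by simp
  have l2: "((\<lambda>x. exp (- (real (L x) * (real (L x) - 1)) / (2 * x))) \<longlongrightarrow> exp (- (t^2) / 2)) at_top"
    using lim_helper[OF Ll, of "-1" 0] by simp
  have ev: "eventually (\<lambda>x. 2 * (- t * sqrt x + 1) \<le> x) at_top" by real_asymp
  have ev2: "eventually (\<lambda>x. x \<ge> 2 \<and> 2 * real (L x) \<le> x) at_top"
    using ev eventually_ge_at_top[of 2]
  proof eventually_elim
    case (elim x)
    have "t * sqrt x < 0" using t elim by (simp add: mult_neg_pos)
    then have "\<lfloor>t * sqrt x\<rfloor> \<le> 0" by simp
    then have "real (L x) = - of_int \<lfloor>t * sqrt x\<rfloor>" by (simp add: L_def)
    then have "real (L x) \<le> - t * sqrt x + 1" using fl[of "t * sqrt x"] by linarith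
    then have "2 * real (L x) \<le> 2 * (- t * sqrt x + 1)" by simp
    then have "2 * real (L x) \<le> x" using elim(1) by (rule order_trans)
    then show ?case using elim by simp
  qed
  have ev3: "eventually (\<lambda>x. x \<ge> 2 \<and> 2 * real (L x) \<le> x \<and> L x \<le> md x) at_top"
    using ev2
  proof eventually_elim
    case (elim x)
    then show ?case using md_bounds[of x] by linarith
  qed
  have "((\<lambda>x. rho x (md x - L x)) \<longlongrightarrow> exp (- (t^2) / 2)) at_top"
  proof (rule tendsto_sandwich[OF _ _ l1 l2])
    show "\<forall>\<^sub>F x in at_top. exp (- (real (L x) * (real (L x) + 1)) / (2 * x) - 2 * real (L x) ^ 3 / x^2) \<le> rho x (md x - L x)"
      using ev3 by eventually_elim (intro rho_down_lower, auto)
    show "\<forall>\<^sub>F x in at_top. rho x (md x - L x) \<le> exp (- (real (L x) * (real (L x) - 1)) / (2 * x))"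
      using ev3 by eventually_elim (intro rho_down_upper, auto)
  qed
  then have "((\<lambda>x. rho x (md x - L x) powr q) \<longlongrightarrow> exp (- (t^2) / 2) powr q) at_top"
    by (intro tendsto_powr) auto
  moreover have "eventually (\<lambda>x. rho x (md x - L x) powr q = gg q x t) at_top"
    using ev3
  proof eventually_elim
    case (elim x)
    have "sqrt x > 0" using elim by simp
    then have "t * sqrt x < 0" using t by (simp add: mult_neg_pos)
    then have "\<lfloor>t * sqrt x\<rfloor> \<le> 0" by simp
    then have e: "int (md x) + \<lfloor>t * sqrt x\<rfloor> = int (md x - L x)" using elim by (simp add: L_def)
    show ?case unfolding gg_def Let_def e by simp
  qed
  ultimately show ?thesis using tendsto_cong by fastforce
qed




lemma rho_powr_le: assumes "x \<ge> 1" "q \<ge> 1" shows "rho x j powr q \<le> rho x j"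
proof -
  have "rho x j powr q \<le> rho x j powr 1"
    using rho_pos[of x j] rho_le1[OF assms(1), of j] assms by (intro powr_mono') auto
  then show ?thesis using rho_pos[of x j] assms by simp
qed

lemma gg_dom: assumes "x \<ge> 1" "q \<ge> 1" shows "gg q x t \<le> exp (3/2 - \<bar>t\<bar>/2)"
proof -
  define s where "s = sqrt x"
  have s: "s \<ge> 1" "x = s * s" using assms by (auto simp: s_def)
  show ?thesis
  proof (cases "t \<ge> 0")
    case True
    define K where "K = nat \<lfloor>t * s\<rfloor>"
    have "\<lfloor>t * s\<rfloor> \<ge> 0" using True s by simp
    then have g: "gg q x t = rho x (md x + K) powr q"
      by (simp add: gg_def K_def Let_def nat_add_distrib s_def)
    have K: "t * s - 1 \<le> real K" using fl[of "t * s"] \<open>\<lfloor>t * s\<rfloor> \<ge> 0\<close> unfolding K_def by simp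
    have a: "gg q x t \<le> rho x (md x + K)" using g rho_powr_le[OF assms] by simp
    have b: "rho x (md x + K) \<le> exp (- (real K - 1 - s) / (2 * s))"
      using rho_up_dom[OF assms(1), of K] unfolding s_def .
    have "gg q x t \<le> exp (- (real K - 1 - s) / (2 * s))" using order_trans[OF a b] .
    also have "\<dots> \<le> exp (3/2 - \<bar>t\<bar>/2)"
    proof -
      have "(t * s - 2 - s) / (2 * s) \<le> (real K - 1 - s) / (2 * s)"
        using K s by (intro divide_right_mono) auto
      moreover have "(t * s - 2 - s) / (2 * s) = t/2 - 1/s - 1/2" using s by (simp add: field_simps)
      moreover have "1 / s \<le> 1" using s by simp
      ultimately have "- ((real K - 1 - s) / (2 * s)) \<le> 3/2 - \<bar>t\<bar>/2" using True by linarith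
      then have "- (real K - 1 - s) / (2 * s) \<le> 3/2 - \<bar>t\<bar>/2" by (simp only: minus_divide_left)
      then show ?thesis by simp
    qed
    finally show ?thesis .
  next
    case False
    then have t: "t < 0" by simp
    show ?thesis
    proof (cases "0 \<le> int (md x) + \<lfloor>t * s\<rfloor>")
      case False
      then have "gg q x t = 0" by (simp add: gg_def Let_def s_def)
      then show ?thesis by simp
    next
      case True
      define L where "L = nat (- \<lfloor>t * s\<rfloor>)"
      have ts: "t * s < 0" using t s by (simp add: mult_neg_pos)
      then have fl0: "\<lfloor>t * s\<rfloor> \<le> 0" by simp
      then have Lr: "real L = - of_int \<lfloor>t * s\<rfloor>" by (simp add: L_def)
      have Lm: "L \<le> md x" using True fl0 unfolding L_def by linarith
      have e: "int (md x) + \<lfloor>t * s\<rfloor> = int (md x - L)" using Lm fl0 by (simp add: L_def)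
      have g: "gg q x t = rho x (md x - L) powr q"
        unfolding gg_def Let_def s_def[symmetric] e by simp
      have "gg q x t \<le> exp (- (real L * (real L - 1)) / (2 * x))"
        using g rho_powr_le[OF assms] rho_down_upper[OF assms(1) Lm] by (metis order_trans)
      also have "\<dots> \<le> exp (3/2 - \<bar>t\<bar>/2)"
      proof -
        define y where "y = real L / s"
        have y: "y \<ge> - t" using fl[of "t * s"] Lr s unfolding y_def by (simp add: field_simps)
        have y0: "y \<ge> 0" using y t by simp
        have "real L * (real L - 1) / x = y^2 - y / s" using s by (simp add: y_def field_simps power2_eq_square)
        moreover have "y / s \<le> y" using s y0 by (simp add: divide_le_eq mult_le_cancel_left1)
        moreover have "y^2 - y \<ge> y - 1" using zero_le_power2[of "y - 1"] by (simp add: power2_eq_square algebra_simps)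
        ultimately have "real L * (real L - 1) / x \<ge> - t - 1" using y by linarith
        moreover have "- (real L * (real L - 1)) / (2 * x) = - (real L * (real L - 1) / x) / 2" by simp
        ultimately have "- (real L * (real L - 1)) / (2 * x) \<le> 3/2 - \<bar>t\<bar>/2" using t by linarith
        then show ?thesis by simp
      qed
      finally show ?thesis .
    qed
  qed
qed

lemma w_int: "integrable lborel (\<lambda>t::real. exp (3/2 - \<bar>t\<bar>/2))"
proof -
  define P1 where "P1 = (\<lambda>t::real. indicator {0<..} t *\<^sub>R exp (- (t * (1/2))))"
  have i1: "integrable lborel P1"
    using integrable_I0i_exp_mscale[of "1/2"] unfolding set_integrable_def P1_def by simp
  have i2: "integrable lborel (\<lambda>t. P1 (0 + (-1) * t))"
    using lborel_integrable_real_affine_iff[of "-1" P1 0] i1 by simp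
  have i3: "integrable lborel (indicator {0::real} :: real \<Rightarrow> real)"
    by (intro integrable_real_indicator) auto
  have A: "integrable lborel (\<lambda>t. exp (3/2) * (P1 t + P1 (0 + (-1) * t) + indicator {0::real} t))"
    using Bochner_Integration.integrable_add[OF Bochner_Integration.integrable_add[OF i1 i2] i3] by (rule integrable_mult_right)
  have B: "(\<lambda>t. exp (3/2) * (P1 t + P1 (0 + (-1) * t) + indicator {0::real} t)) = (\<lambda>t::real. exp (3/2 - \<bar>t\<bar>/2))"
  proof
    fix t :: real
    consider "t > 0" | "t < 0" | "t = 0" by linarith
    then show "exp (3/2) * (P1 t + P1 (0 + (-1) * t) + indicator {0::real} t) = exp (3/2 - \<bar>t\<bar>/2)"
      by cases (auto simp: P1_def exp_diff exp_minus field_simps indicator_def exp_add[symmetric])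
  qed
  show ?thesis using A unfolding B .
qed

lemma gauss_int: assumes "q > 0"
  shows "integral\<^sup>L lborel (\<lambda>t. exp (- (t^2) / 2) powr q) = sqrt (2 * pi / q)"
proof -
  have "(\<lambda>t. exp (- (t^2) / 2) powr q) = (\<lambda>t. sqrt (2 * pi / q) * normal_density 0 (1 / sqrt q) t)"
  proof
    fix t
    have "sqrt (2 * pi / q) * normal_density 0 (1 / sqrt q) t = exp (- t\<^sup>2 / (2 * (1 / sqrt q)\<^sup>2))"
      using assms by (simp add: normal_density_def power_divide real_sqrt_divide)
    also have "\<dots> = exp (- (t^2) / 2) powr q" using assms by (simp add: exp_powr_real field_simps)
    finally show "exp (- (t^2) / 2) powr q = sqrt (2 * pi / q) * normal_density 0 (1 / sqrt q) t" by simp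
  qed
  then show ?thesis using assms by simp
qed

lemma TT_lim: assumes "q \<ge> 1" shows "((\<lambda>x. TT q x / sqrt x) \<longlongrightarrow> sqrt (2 * pi / q)) at_top"
proof -
  have "((\<lambda>x. integral\<^sup>L lborel (gg q x)) \<longlongrightarrow> integral\<^sup>L lborel (\<lambda>t. exp (- (t^2) / 2) powr q)) at_top"
  proof (rule integral_dominated_convergence_at_top[OF _ _ w_int])
    show "(\<lambda>t. exp (- (t^2) / 2) powr q) \<in> borel_measurable lborel" by measurable
    show "gg q x \<in> borel_measurable lborel" for x by measurable
    show "AE t in lborel. ((\<lambda>x. gg q x t) \<longlongrightarrow> exp (- (t^2) / 2) powr q) at_top"
      by (intro AE_I2 gg_lim)
    show "\<forall>\<^sub>F x in at_top. AE t in lborel. norm (gg q x t) \<le> exp (3/2 - \<bar>t\<bar>/2)"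
      using eventually_ge_at_top[of 1]
      by eventually_elim (intro AE_I2, use assms in \<open>simp add: gg_nonneg gg_dom\<close>)
  qed
  then have "((\<lambda>x. integral\<^sup>L lborel (gg q x)) \<longlongrightarrow> sqrt (2 * pi / q)) at_top"
    using gauss_int[of q] assms by simp
  moreover have "eventually (\<lambda>x. integral\<^sup>L lborel (gg q x) = TT q x / sqrt x) at_top"
    using eventually_ge_at_top[of 1]
    by eventually_elim (use gg_integral assms in \<open>simp add: has_bochner_integral_integral_eq\<close>)
  ultimately show ?thesis using tendsto_cong by fastforce
qed




lemma aa_sums: "(\<lambda>j. aa x j) sums exp x"
  using exp_converges[of x] by (simp add: aa_def divide_inverse mult.commute scaleR_conv_of_real)

lemma TT1: assumes "x \<ge> 1" shows "TT 1 x = (\<Sum>j. rho x j)" "TT 1 x > 0"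
proof -
  have e: "rho x j powr 1 = rho x j" for j using rho_pos[of x j] assms by simp
  show 1: "TT 1 x = (\<Sum>j. rho x j)" unfolding TT_def e ..
  show "TT 1 x > 0" unfolding 1 using rho_pos[of x] assms summable_rho[of x] by (intro suminf_pos) auto
qed

lemma exp_repr: assumes "x \<ge> 1" shows "exp x = aa x (md x) * TT 1 x"
proof -
  have "(\<lambda>j. aa x (md x) * rho x j) sums (aa x (md x) * TT 1 x)"
    unfolding TT1(1)[OF assms] using summable_rho[of x] assms by (intro sums_mult summable_sums) auto
  moreover have "(\<lambda>j. aa x (md x) * rho x j) = aa x"
    using aa_pos[of x "md x"] assms by (auto simp: rho_def fun_eq_iff)
  ultimately show ?thesis using aa_sums[of x] sums_unique2 by metis
qed

lemma f_repr:
  assumes "0 < \<nu>" "\<nu> \<le> 1" "r \<ge> 1"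
  shows "ftilde \<nu> r = (exp (r powr \<nu>) / TT 1 (r powr \<nu>)) powr (1/\<nu>) * TT (1/\<nu>) (r powr \<nu>)"
proof -
  define x where "x = r powr \<nu>"
  define p where "p = 1 / \<nu>"
  have x1: "x \<ge> 1" using assms unfolding x_def by (simp add: ge_one_powr_ge_zero)
  have p1: "p \<ge> 1" using assms by (simp add: p_def)
  define A where "A = aa x (md x)"
  have A: "A > 0" using aa_pos[of x] x1 by (simp add: A_def)
  have e1: "cc \<nu> j * r ^ j = A powr p * rho x j powr p" for j
  proof -
    have b: "cc \<nu> j * r ^ j > 0" using bpos assms by simp
    have "cc \<nu> j * r ^ j = ((cc \<nu> j * r ^ j) powr \<nu>) powr p"
      using b assms by (simp add: powr_powr p_def)
    also have "(cc \<nu> j * r ^ j) powr \<nu> = aa x j" using bpow[of \<nu> r j] assms by (simp add: aa_def x_def)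
    also have "aa x j = A * rho x j" using A by (simp add: rho_def A_def)
    also have "(A * rho x j) powr p = A powr p * rho x j powr p"
      using A rho_pos[of x j] x1 by (simp add: powr_mult)
    finally show ?thesis .
  qed
  have "ftilde \<nu> r = (\<Sum>j. A powr p * rho x j powr p)" unfolding ftilde_eq e1 ..
  also have "\<dots> = A powr p * TT p x"
    unfolding TT_def using summable_rho_powr[OF x1 p1] by (rule suminf_mult)
  also have "A = exp x / TT 1 x" using exp_repr[OF x1] TT1[OF x1] by (simp add: A_def)
  finally show ?thesis by (simp add: x_def p_def)
qed

definition KK :: "real \<Rightarrow> real" where "KK \<nu> = (2*pi) powr ((\<nu>-1)/(2*\<nu>)) * sqrt \<nu>"

definition QQ :: "real \<Rightarrow> real \<Rightarrow> real" where
  "QQ \<nu> x = (TT (1/\<nu>) x / sqrt x) / ((TT 1 x / sqrt x) powr (1/\<nu>) * KK \<nu>)"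

lemma KK_pos: "\<nu> > 0 \<Longrightarrow> KK \<nu> > 0" by (simp add: KK_def)

lemma ratio_eq:
  assumes "0 < \<nu>" "\<nu> \<le> 1" "r \<ge> 1"
  shows "ftilde \<nu> r / ((2*pi) powr ((\<nu>-1)/(2*\<nu>)) * sqrt \<nu> * r powr ((\<nu>-1)/2) * exp (r powr \<nu> / \<nu>)) = QQ \<nu> (r powr \<nu>)"
proof -
  define x where "x = r powr \<nu>"
  define p where "p = 1 / \<nu>"
  have r0: "r > 0" using assms by simp
  have x1: "x \<ge> 1" using assms unfolding x_def by (simp add: ge_one_powr_ge_zero)
  define T1 where "T1 = TT 1 x"
  define Tp where "Tp = TT p x"
  have T1: "T1 > 0" using TT1[OF x1] by (simp add: T1_def)
  have K: "KK \<nu> > 0" using KK_pos assms by simp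
  have sx: "sqrt x = r powr (\<nu>/2)"
    using r0 by (simp add: x_def powr_half_sqrt[symmetric] powr_powr)
  have sxp: "sqrt x powr p = r powr (1/2)"
    using r0 assms by (simp add: sx powr_powr p_def)
  have key: "sqrt x = r powr ((\<nu>-1)/2) * sqrt x powr p"
    unfolding sxp using r0 by (simp add: sx powr_add[symmetric] field_simps)
  have f: "ftilde \<nu> r = exp (x / \<nu>) / T1 powr p * Tp"
    using f_repr[OF assms] T1 by (simp add: x_def p_def T1_def Tp_def powr_divide exp_powr_real field_simps)
  have "ftilde \<nu> r / (KK \<nu> * r powr ((\<nu>-1)/2) * exp (x / \<nu>)) = Tp / (T1 powr p * KK \<nu> * r powr ((\<nu>-1)/2))"
    unfolding f using T1 K by (simp add: field_simps)
  also have "\<dots> = (Tp / sqrt x) / ((T1 / sqrt x) powr p * KK \<nu>)"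
  proof -
    have sx0: "sqrt x > 0" using x1 by simp
    have "(T1 / sqrt x) powr p = T1 powr p / sqrt x powr p" using T1 sx0 by (simp add: powr_divide)
    moreover have "sqrt x powr p > 0" using sx0 by simp
    ultimately show ?thesis using T1 K sx0 r0
      by (subst key) (simp add: field_simps)
  qed
  finally show ?thesis by (simp add: QQ_def KK_def x_def p_def T1_def Tp_def mult.assoc)
qed

lemma QQ_lim: assumes "0 < \<nu>" "\<nu> \<le> 1" shows "(QQ \<nu> \<longlongrightarrow> 1) at_top"
proof -
  have p1: "1/\<nu> \<ge> 1" using assms by simp
  have "(QQ \<nu> \<longlongrightarrow> sqrt (2 * pi / (1/\<nu>)) / (sqrt (2 * pi / 1) powr (1/\<nu>) * KK \<nu>)) at_top"
    unfolding QQ_def using KK_pos[OF assms(1)]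
    by (intro tendsto_intros TT_lim p1 tendsto_powr) auto
  moreover have "sqrt (2 * pi / (1/\<nu>)) / (sqrt (2 * pi / 1) powr (1/\<nu>) * KK \<nu>) = 1"
  proof -
    have a: "sqrt (2 * pi / (1/\<nu>)) = (2*pi) powr (1/2) * sqrt \<nu>"
      using assms by (simp add: powr_half_sqrt real_sqrt_mult)
    have b: "sqrt (2 * pi / 1) powr (1/\<nu>) * KK \<nu> = (2*pi) powr (1/(2*\<nu>) + (\<nu>-1)/(2*\<nu>)) * sqrt \<nu>"
      unfolding KK_def by (simp add: powr_half_sqrt[symmetric] powr_powr powr_add)
    have c: "1/(2*\<nu>) + (\<nu>-1)/(2*\<nu>) = 1/2" using assms by (simp add: field_simps)
    show ?thesis unfolding a b c using assms by simp
  qed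
  ultimately show ?thesis by (metis (no_types, lifting))
qed

lemma asymp_main:
  assumes "0 < \<nu>" "\<nu> \<le> 1"
  shows "(\<lambda>x::'a::real_normed_vector. ftilde \<nu> (norm x)) \<sim>[at_infinity]
         (\<lambda>x. (2*pi) powr ((\<nu>-1)/(2*\<nu>)) * sqrt \<nu> * norm x powr ((\<nu>-1)/2) * exp (norm x powr \<nu> / \<nu>))"
proof (rule asymp_equivI')
  define R where "R = (\<lambda>r. ftilde \<nu> r / ((2*pi) powr ((\<nu>-1)/(2*\<nu>)) * sqrt \<nu> * r powr ((\<nu>-1)/2) * exp (r powr \<nu> / \<nu>)))"
  have "filterlim (\<lambda>r. QQ \<nu> (r powr \<nu>)) (nhds 1) at_top"
    by (rule filterlim_compose[OF QQ_lim[OF assms] real_powr_at_top[OF assms(1)]])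
  moreover have "eventually (\<lambda>r. QQ \<nu> (r powr \<nu>) = R r) at_top"
    using eventually_ge_at_top[of 1] by eventually_elim (simp add: R_def ratio_eq assms)
  ultimately have "(R \<longlongrightarrow> 1) at_top" using tendsto_cong by fastforce
  then have "((\<lambda>x::'a. R (norm x)) \<longlongrightarrow> 1) at_infinity"
    by (rule filterlim_compose[OF _ filterlim_norm_at_top])
  then show "((\<lambda>x::'a. ftilde \<nu> (norm x) / ((2*pi) powr ((\<nu>-1)/(2*\<nu>)) * sqrt \<nu> * norm x powr ((\<nu>-1)/2) * exp (norm x powr \<nu> / \<nu>))) \<longlongrightarrow> 1) at_infinity"
    by (simp add: R_def)
qed


theorem lemmaA1:
  fixes \<nu> :: real and \<xi> :: "'a::euclidean_space"
  assumes "0 < \<nu>" and "\<nu> \<le> 1"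
  shows
    "(\<Sum>j. real (j+1) * fact (j+1) powr (-1/\<nu>) * norm \<xi> ^ (j+1))
        \<le> norm \<xi> powr \<nu> * (\<Sum>j. fact j powr (-1/\<nu>) * norm \<xi> ^ j)
     \<and> norm \<xi> powr \<nu> * (\<Sum>j. fact j powr (-1/\<nu>) * norm \<xi> ^ j)
        \<le> (\<Sum>j. real (j+1) * fact j powr (-1/\<nu>) * norm \<xi> ^ j)
     \<and> (\<Sum>j. inverse (real (j+1)) * fact j powr (-1/\<nu>) * norm \<xi> ^ (j+1))
        \<le> norm \<xi> powr (1-\<nu>) * (\<Sum>j. fact j powr (-1/\<nu>) * norm \<xi> ^ j)
     \<and> (\<xi> \<noteq> 0 \<longrightarrow>
          deriv (ftilde \<nu>) (norm \<xi>) / ftilde \<nu> (norm \<xi>) \<le> norm \<xi> powr (\<nu>-1)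
        \<and> norm \<xi> powr (\<nu>-1) \<le> ftilde \<nu> (norm \<xi>) / Fbig \<nu> (norm \<xi>)
        \<and> deriv (Fbig \<nu>) (norm \<xi>) = ftilde \<nu> (norm \<xi>))
     \<and> norm \<xi> powr \<nu> * ftilde \<nu> (norm \<xi>) \<le> deriv (\<lambda>r. r * ftilde \<nu> r) (norm \<xi>)
     \<and> (\<forall>a>0. Fbig \<nu> a * max (norm \<xi>) a powr (\<nu>-1) * exp ((norm \<xi> powr \<nu> - a powr \<nu>) / \<nu>)
               \<le> ftilde \<nu> (norm \<xi>))
     \<and> ftilde \<nu> (norm \<xi>) \<le> exp (norm \<xi> powr \<nu> / \<nu>)
     \<and> (\<lambda>x::'a. ftilde \<nu> (norm x)) \<sim>[at_infinity]
         (\<lambda>x. (2*pi) powr ((\<nu>-1)/(2*\<nu>)) * sqrt \<nu> * norm x powr ((\<nu>-1)/2)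
               * exp (norm x powr \<nu> / \<nu>))"
proof -
  define r where "r = norm \<xi>"
  have r0: "r \<ge> 0" by (simp add: r_def)
  have fE: "(\<Sum>j. fact j powr (-1/\<nu>) * r ^ j) = ftilde \<nu> r" by (simp add: ftilde_def)
  have c1: "(\<Sum>j. real (j+1) * fact (j+1) powr (-1/\<nu>) * r ^ (j+1)) \<le> r powr \<nu> * ftilde \<nu> r"
  proof -
    have "(\<Sum>j. real (j+1) * fact (j+1) powr (-1/\<nu>) * r ^ (j+1)) = (\<Sum>j. real (Suc j) * (cc \<nu> (Suc j) * r ^ Suc j))"
      by (simp add: cc_def mult.assoc)
    then show ?thesis using A31[OF assms r0] by simp
  qed
  have c2: "r powr \<nu> * ftilde \<nu> r \<le> (\<Sum>j. real (j+1) * fact j powr (-1/\<nu>) * r ^ j)"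
  proof -
    have "(\<Sum>j. real (j+1) * fact j powr (-1/\<nu>) * r ^ j) = (\<Sum>j. real (Suc j) * (cc \<nu> j * r ^ j))"
      by (simp add: cc_def mult.assoc)
    then show ?thesis using A32[OF assms r0] by simp
  qed
  have c3: "(\<Sum>j. inverse (real (j+1)) * fact j powr (-1/\<nu>) * r ^ (j+1)) \<le> r powr (1-\<nu>) * ftilde \<nu> r"
  proof -
    have "(\<Sum>j. inverse (real (j+1)) * fact j powr (-1/\<nu>) * r ^ (j+1)) = (\<Sum>j. inverse (real (Suc j)) * cc \<nu> j * r ^ Suc j)"
      by (simp add: cc_def)
    then show ?thesis using A4[OF assms r0] by simp
  qed
  have c4: "\<xi> \<noteq> 0 \<longrightarrow>
          deriv (ftilde \<nu>) r / ftilde \<nu> r \<le> r powr (\<nu>-1)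
        \<and> r powr (\<nu>-1) \<le> ftilde \<nu> r / Fbig \<nu> r
        \<and> deriv (Fbig \<nu>) r = ftilde \<nu> r"
  proof
    assume "\<xi> \<noteq> 0"
    then have rp: "r > 0" by (simp add: r_def)
    have fp: "ftilde \<nu> r > 0" using ftilde_pos[OF assms r0] by simp
    have Fp: "Fbig \<nu> r > 0" using Fbig_pos[OF assms rp] .
    have "deriv (ftilde \<nu>) r / ftilde \<nu> r \<le> r powr (\<nu>-1)"
      using A5a[OF assms rp] fp by (simp add: pos_divide_le_eq)
    moreover have "r powr (\<nu>-1) \<le> ftilde \<nu> r / Fbig \<nu> r"
      using A5b[OF assms rp] Fp by (simp add: pos_le_divide_eq)
    moreover have "deriv (Fbig \<nu>) r = ftilde \<nu> r" by (rule deriv_Fbig(2)[OF assms])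
    ultimately show "deriv (ftilde \<nu>) r / ftilde \<nu> r \<le> r powr (\<nu>-1)
        \<and> r powr (\<nu>-1) \<le> ftilde \<nu> r / Fbig \<nu> r
        \<and> deriv (Fbig \<nu>) r = ftilde \<nu> r" by blast
  qed
  have c5: "r powr \<nu> * ftilde \<nu> r \<le> deriv (\<lambda>r. r * ftilde \<nu> r) r"
    using A32[OF assms r0] deriv_rf[OF assms, of r] by simp
  have c6: "\<forall>a>0. Fbig \<nu> a * max r a powr (\<nu>-1) * exp ((r powr \<nu> - a powr \<nu>) / \<nu>) \<le> ftilde \<nu> r"
    using A7low[OF assms r0] by blast
  have c7: "ftilde \<nu> r \<le> exp (r powr \<nu> / \<nu>)" by (rule A7up[OF assms r0])
  have c8: "(\<lambda>x::'a. ftilde \<nu> (norm x)) \<sim>[at_infinity]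
         (\<lambda>x. (2*pi) powr ((\<nu>-1)/(2*\<nu>)) * sqrt \<nu> * norm x powr ((\<nu>-1)/2)
               * exp (norm x powr \<nu> / \<nu>))" by (rule asymp_main[OF assms])
  show ?thesis using c1 c2 c3 c4 c5 c6 c7 c8 unfolding fE r_def[symmetric] by blast
qed

end
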